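(* Let $\mathfrak{g}$ be a real Lie algebra of dimension $2n$ and let $V\subset\mathfrak{g}$ be a subspace of dimension $n$ such that: (1) the linear map $\tilde N^H\colon V^{\mathrm{ann}}\to\Lambda^2V^*$ has rank three; (2) its image $W=\operatorname{im}\tilde N^H$ consists of simple forms, i.e. $\eta\wedge\eta=0$ for all $\eta\in W$; (3) there is no $\sigma\in V^*\setminus\{0\}$ such that $\sigma\wedge\eta=0$ for all $\eta\in W$. Then for any Lie subalgebra $H\subset\mathfrak{g}$ complementary to $V$ there exists a $\mathrm{GL}(n,\mathbb{R})$-structure compatible with the splitting $\mathfrak{g}=V\oplus H$ whose intrinsic torsion satisfies $\tau_2=0=\tau_5=\tau_6$.
   Context: $d$ denotes the Chevalley--Eilenberg differential on $\Lambda\mathfrak{g}^*$, so $d\xi(X,Y)=-\xi([X,Y])$ for $\xi\in\mathfrak{g}^*$. $V^{\mathrm{ann}}\subset\mathfrak{g}^*$ is the annihilator of $V$, and $\tilde N^H(\xi)=d\xi|_{V\times V}\in\Lambda^2V^*$. A $\mathrm{GL}(n,\mathbb{R})$-structure compatible with $\mathfrak{g}=V\oplus H$ is a pseudoriemannian (necessarily neutral) metric $g$ on $\mathfrak{g}$ with $g(KX,KY)=-g(X,Y)$, where $K=\mathrm{id}_V-\mathrm{id}_H$; equivalently a nondegenerate two-form $F(X,Y)=g(KX,Y)$ vanishing on $V\times V$ and on $H\times H$. In this setting the components $\tau_1+\tau_2$ of the intrinsic torsion correspond (up to a nonzero constant factor) to the tensor $A(X,Y,Z)=g([X,Y],Z)$,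 $X,Y,Z\in V$, viewed in $\Lambda^2V^*\otimes V^*=\Lambda^3V^*\oplus W_2$, where $\tau_1$ is its totally skew part and $\tau_2$ its component in the complement $W_2$ (the kernel of the alternation map $\Lambda^2V^*\otimes V^*\to\Lambda^3V^*$); thus $\tau_2=0$ means that $A$ is totally skew-symmetric. Similarly $\tau_5+\tau_6$ correspond to $B(X,Y,Z)=g([X,Y],Z)$ for $X,Y,Z\in H$, so $\tau_5=\tau_6=0$ means $B=0$. *)

theory Defs
  imports "HOL-Analysis.Analysis" "HOL-Library.Function_Algebras"
begin

definition lie_bracket :: "('a::real_vector \<Rightarrow> 'a \<Rightarrow> 'a) \<Rightarrow> bool" where
  "lie_bracket br \<longleftrightarrow> bilinear br \<and> (\<forall>x y. br x y = - br y x) \<and>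
     (\<forall>x y z. br x (br y z) + br y (br z x) + br z (br x y) = 0)"

definition lie_subalgebra :: "('a::real_vector \<Rightarrow> 'a \<Rightarrow> 'a) \<Rightarrow> 'a set \<Rightarrow> bool" where
  "lie_subalgebra br H \<longleftrightarrow> subspace H \<and> (\<forall>x\<in>H. \<forall>y\<in>H. br x y \<in> H)"

definition complementary :: "'a::real_vector set \<Rightarrow> 'a set \<Rightarrow> bool" where
  "complementary V H \<longleftrightarrow> subspace V \<and> subspace H \<and> V \<inter> H = {0} \<and>
     (\<forall>x. \<exists>v\<in>V. \<exists>h\<in>H. x = v + h)"

definition annihilator :: "'a::real_vector set \<Rightarrow> ('a \<Rightarrow> real) set" where
  "annihilator V = {\<xi>. linear \<xi> \<and> (\<forall>v\<in>V. \<xi> v = 0)}"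

text \<open>Two-forms on V are represented by functions 'a => 'a => real that vanish
  outside V x V (i.e. their values off V x V carry no information).\<close>
definition restrict2 :: "'a set \<Rightarrow> ('a \<Rightarrow> 'a \<Rightarrow> real) \<Rightarrow> ('a \<Rightarrow> 'a \<Rightarrow> real)" where
  "restrict2 V \<omega> = (\<lambda>X Y. if X \<in> V \<and> Y \<in> V then \<omega> X Y else 0)"

definition CE_d :: "('a \<Rightarrow> 'a \<Rightarrow> 'a) \<Rightarrow> ('a \<Rightarrow> real) \<Rightarrow> ('a \<Rightarrow> 'a \<Rightarrow> real)" where
  "CE_d br \<xi> = (\<lambda>X Y. - \<xi> (br X Y))"

definition NtH :: "('a \<Rightarrow> 'a \<Rightarrow> 'a) \<Rightarrow> 'a set \<Rightarrow> ('a \<Rightarrow> real) \<Rightarrow> ('a \<Rightarrow> 'a \<Rightarrow> real)" where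
  "NtH br V \<xi> = restrict2 V (CE_d br \<xi>)"

definition dim_forms2 :: "('a \<Rightarrow> 'a \<Rightarrow> real) set \<Rightarrow> nat" where
  "dim_forms2 W = vector_space.dim (\<lambda>c \<omega>. (\<lambda>X Y. c * \<omega> X Y)) W"

definition wedge22 :: "('a \<Rightarrow> 'a \<Rightarrow> real) \<Rightarrow> ('a \<Rightarrow> 'a \<Rightarrow> real) \<Rightarrow> 'a \<Rightarrow> 'a \<Rightarrow> 'a \<Rightarrow> 'a \<Rightarrow> real" where
  "wedge22 \<eta> \<mu> a b c d =
     \<eta> a b * \<mu> c d - \<eta> a c * \<mu> b d + \<eta> a d * \<mu> b c
   + \<eta> b c * \<mu> a d - \<eta> b d * \<mu> a c + \<eta> c d * \<mu> a b"

definition wedge12 :: "('a \<Rightarrow> real) \<Rightarrow> ('a \<Rightarrow> 'a \<Rightarrow> real) \<Rightarrow> 'a \<Rightarrow> 'a \<Rightarrow> 'a \<Rightarrow> real" where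
  "wedge12 \<sigma> \<eta> a b c = \<sigma> a * \<eta> b c - \<sigma> b * \<eta> a c + \<sigma> c * \<eta> a b"

definition splitK :: "'a::real_vector set \<Rightarrow> 'a set \<Rightarrow> 'a \<Rightarrow> 'a" where
  "splitK V H x = (THE y. \<exists>v\<in>V. \<exists>h\<in>H. x = v + h \<and> y = v - h)"

definition pseudo_metric :: "('a::real_vector \<Rightarrow> 'a \<Rightarrow> real) \<Rightarrow> bool" where
  "pseudo_metric g \<longleftrightarrow> bilinear g \<and> (\<forall>X Y. g X Y = g Y X) \<and>
     (\<forall>X. (\<forall>Y. g X Y = 0) \<longrightarrow> X = 0)"

definition GL_structure_compatible :: "'a::real_vector set \<Rightarrow> 'a set \<Rightarrow> ('a \<Rightarrow> 'a \<Rightarrow> real) \<Rightarrow> bool" where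
  "GL_structure_compatible V H g \<longleftrightarrow> pseudo_metric g \<and>
     (\<forall>X Y. g (splitK V H X) (splitK V H Y) = - g X Y)"

definition tau2_zero :: "('a \<Rightarrow> 'a \<Rightarrow> 'a) \<Rightarrow> 'a set \<Rightarrow> ('a \<Rightarrow> 'a \<Rightarrow> real) \<Rightarrow> bool" where
  "tau2_zero br V g \<longleftrightarrow> (let A = (\<lambda>X Y Z. g (br X Y) Z) in
     \<forall>X\<in>V. \<forall>Y\<in>V. \<forall>Z\<in>V. A X Y Z = - A Y X Z \<and> A X Y Z = - A X Z Y \<and> A X Y Z = - A Z Y X)"

definition tau56_zero :: "('a \<Rightarrow> 'a \<Rightarrow> 'a) \<Rightarrow> 'a set \<Rightarrow> ('a \<Rightarrow> 'a \<Rightarrow> real) \<Rightarrow> bool" where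
  "tau56_zero br H g \<longleftrightarrow> (\<forall>X\<in>H. \<forall>Y\<in>H. \<forall>Z\<in>H. g (br X Y) Z = 0)"

end

theory Submission
  imports Defs
begin

definition om :: "'a::real_inner \<Rightarrow> 'a \<Rightarrow> 'a \<Rightarrow> 'a \<Rightarrow> real" where
  "om p q = (\<lambda>x y. (p \<bullet> x) * (q \<bullet> y) - (p \<bullet> y) * (q \<bullet> x))"

lemma riesz:
  fixes f :: "'a::euclidean_space \<Rightarrow> real"
  assumes "linear f" shows "\<exists>k. \<forall>x. f x = k \<bullet> x"
proof -
  have "f x = (\<Sum>b\<in>Basis. f b *\<^sub>R b) \<bullet> x" for x
  proof -
    have "f x = f (\<Sum>b\<in>Basis. (x \<bullet> b) *\<^sub>R b)" by (simp add: euclidean_representation)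
    also have "\<dots> = (\<Sum>b\<in>Basis. (x \<bullet> b) * f b)"
      using assms by (simp add: linear_sum linear_scale)
    also have "\<dots> = (\<Sum>b\<in>Basis. f b *\<^sub>R b) \<bullet> x"
      by (simp add: inner_sum_left inner_commute[of _ x] mult.commute inner_sum_right)
    finally show ?thesis .
  qed
  then show ?thesis by blast
qed

lemma riesz_V:
  fixes f :: "'a::euclidean_space \<Rightarrow> real"
  assumes "linear f" "subspace V" shows "\<exists>p\<in>V. \<forall>x\<in>V. f x = p \<bullet> x"
proof -
  obtain k where k: "\<And>x. f x = k \<bullet> x" using riesz[OF assms(1)] by blast
  obtain y z where "y \<in> span V" "\<And>w. w \<in> span V \<Longrightarrow> orthogonal z w" "k = y + z"
    using orthogonal_subspace_decomp_exists by metis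
  then show ?thesis using assms(2) k
    by (metis (no_types, lifting) add.right_neutral inner_add_left orthogonal_def span_eq_iff span_superset subsetD)
qed

lemma decomp:
  fixes f :: "'a::euclidean_space \<Rightarrow> 'a \<Rightarrow> real"
  assumes "bilinear f" "subspace V"
    and w: "\<forall>a\<in>V. \<forall>b\<in>V. \<forall>c\<in>V. \<forall>d\<in>V. wedge22 f f a b c d = 0"
    and ab: "a \<in> V" "b \<in> V" "f a b \<noteq> 0"
  shows "\<exists>p\<in>V. \<exists>q\<in>V. \<forall>x\<in>V. \<forall>y\<in>V. f x y = om p q x y"
proof -
  define t where "t = f a b"
  have l1: "linear (\<lambda>x. f a x / t)" using assms(1) unfolding bilinear_def
    by (auto intro!: linearI simp: linear_add linear_scale add_divide_distrib)
  have l2: "linear (\<lambda>x. f b x)" using assms(1) unfolding bilinear_def by simp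
  obtain p where p: "p \<in> V" "\<And>x. x \<in> V \<Longrightarrow> f a x / t = p \<bullet> x" using riesz_V[OF l1 assms(2)] by blast
  obtain q where q: "q \<in> V" "\<And>x. x \<in> V \<Longrightarrow> f b x = q \<bullet> x" using riesz_V[OF l2 assms(2)] by blast
  have "f x y = om p q x y" if "x \<in> V" "y \<in> V" for x y
  proof -
    have "wedge22 f f a b x y = 0" using w ab that by blast
    then have "2 * (t * f x y - f a x * f b y + f a y * f b x) = 0"
      unfolding wedge22_def t_def by (simp add: algebra_simps)
    then have "f x y = (f a x / t) * f b y - (f a y / t) * f b x"
      using ab(3) unfolding t_def[symmetric] by (simp add: field_simps)
    then show ?thesis using p q that by (simp add: om_def)
  qed
  then show ?thesis using p q by blast
qed

definition indep2 :: "'a::real_vector \<Rightarrow> 'a \<Rightarrow> bool" where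
  "indep2 p q \<longleftrightarrow> (\<forall>c d. c *\<^sub>R p + d *\<^sub>R q = 0 \<longrightarrow> c = 0 \<and> d = 0)"

lemma span2: "r \<in> span {p, q} \<longleftrightarrow> (\<exists>a b. r = a *\<^sub>R p + b *\<^sub>R q)"
  apply (auto simp: span_insert span_singleton)
   apply (metis diff_add_cancel add.commute)
  by (rule_tac x=a in exI, rule_tac x=b in exI) simp

lemma om_span:
  fixes p q :: "'a::real_inner"
  assumes "r \<in> span {p, q}" "s \<in> span {p, q}"
  shows "\<exists>c. \<forall>x y. om r s x y = c * om p q x y"
proof -
  obtain a b where r: "r = a *\<^sub>R p + b *\<^sub>R q" using assms(1) span2 by blast
  obtain a' b' where s: "s = a' *\<^sub>R p + b' *\<^sub>R q" using assms(2) span2 by blast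
  show ?thesis
    by (rule exI[of _ "a * b' - b * a'"]) (simp add: r s om_def inner_add_left algebra_simps)
qed

lemma om_dep:
  fixes p q :: "'a::real_inner"
  assumes "\<not> indep2 p q" shows "om p q x y = 0"
proof -
  obtain c d where cd: "c *\<^sub>R p + d *\<^sub>R q = 0" "c \<noteq> 0 \<or> d \<noteq> 0" using assms indep2_def by blast
  show ?thesis
  proof (cases "c = 0")
    case True
    then have "q = 0" using cd by auto
    then show ?thesis by (simp add: om_def)
  next
    case False
    then have "p = (- d / c) *\<^sub>R q" using cd(1)
      by (metis add.commute add_diff_cancel_right' diff_0 divide_inverse_commute eq_vector_fraction_iff
          mult.commute scaleR_minus_left scaleR_scaleR)
    then show ?thesis by (simp add: om_def)
  qed
qed

lemma om_self_zero:
  fixes p q :: "'a::real_inner"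
  assumes "om p q p q = 0" shows "\<not> indep2 p q"
proof -
  have "(p \<bullet> q) * (p \<bullet> q) = (p \<bullet> p) * (q \<bullet> q)" using assms by (simp add: om_def inner_commute)
  then have "\<bar>p \<bullet> q\<bar>^2 = (norm p * norm q)^2"
    by (simp add: power_mult_distrib dot_square_norm[symmetric] power2_eq_square[of "p \<bullet> q"])
  then have "\<bar>p \<bullet> q\<bar> = norm p * norm q"
    by (rule power2_eq_imp_eq) auto
  then have "norm p *\<^sub>R q = norm q *\<^sub>R p \<or> norm p *\<^sub>R q = - norm q *\<^sub>R p"
    using norm_cauchy_schwarz_abs_eq by blast
  then show ?thesis
  proof
    assume h: "norm p *\<^sub>R q = norm q *\<^sub>R p"
    show ?thesis
    proof (cases "p = 0")
      case True then show ?thesis unfolding indep2_def by (rule_tac notI, drule_tac x=1 in spec, drule_tac x=0 in spec) auto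
    next
      case False
      then have "(- norm q) *\<^sub>R p + norm p *\<^sub>R q = 0" using h by simp
      then show ?thesis using False unfolding indep2_def by fastforce
    qed
  next
    assume h: "norm p *\<^sub>R q = - norm q *\<^sub>R p"
    show ?thesis
    proof (cases "p = 0")
      case True then show ?thesis unfolding indep2_def by (rule_tac notI, drule_tac x=1 in spec, drule_tac x=0 in spec) auto
    next
      case False
      then have "norm q *\<^sub>R p + norm p *\<^sub>R q = 0" using h by simp
      then show ?thesis using False unfolding indep2_def by fastforce
    qed
  qed
qed

lemma wedge12_span:
  fixes p q :: "'a::real_inner"
  assumes "z \<in> span {p, q}"
  shows "wedge12 (\<lambda>x. z \<bullet> x) (om p q) a b c = 0"
proof -
  obtain u v where r: "z = u *\<^sub>R p + v *\<^sub>R q" using assms span2 by blast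
  show ?thesis by (simp add: r wedge12_def om_def inner_add_left algebra_simps)
qed

lemma L2:
  fixes p q r s :: "'a::euclidean_space"
  assumes V: "subspace V" and inV: "p\<in>V" "q\<in>V" "r\<in>V" "s\<in>V" and ind: "indep2 p q" "indep2 r s"
    and w: "\<forall>a\<in>V. \<forall>b\<in>V. \<forall>c\<in>V. \<forall>d\<in>V. wedge22 (om p q) (om r s) a b c d = 0"
  shows "\<exists>z. z \<noteq> 0 \<and> z \<in> span {p,q} \<and> z \<in> span {r,s}"
proof -
  obtain r0 r1 where r: "r0 \<in> span {p,q}" "\<And>w. w \<in> span {p,q} \<Longrightarrow> orthogonal r1 w" "r = r0 + r1"
    using orthogonal_subspace_decomp_exists by metis
  obtain s0 s1 where s: "s0 \<in> span {p,q}" "\<And>w. w \<in> span {p,q} \<Longrightarrow> orthogonal s1 w" "s = s0 + s1"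
    using orthogonal_subspace_decomp_exists by metis
  have spV: "span {p,q} \<subseteq> V" using V inV by (simp add: span_minimal)
  have r1V: "r1 \<in> V" using r spV inV V by (metis add_diff_cancel_left' subsetD subspace_diff)
  have s1V: "s1 \<in> V" using s spV inV V by (metis add_diff_cancel_left' subsetD subspace_diff)
  have pq: "p \<in> span {p,q}" "q \<in> span {p,q}" by (auto intro: span_base)
  have o1: "r1 \<bullet> p = 0" "r1 \<bullet> q = 0" "s1 \<bullet> p = 0" "s1 \<bullet> q = 0" "r1 \<bullet> r0 = 0" "r1 \<bullet> s0 = 0"
    "s1 \<bullet> r0 = 0" "s1 \<bullet> s0 = 0"
    using r(2) s(2) pq r(1) s(1) unfolding orthogonal_def by auto
  have o2: "p \<bullet> r1 = 0" "q \<bullet> r1 = 0" "p \<bullet> s1 = 0" "q \<bullet> s1 = 0" "r0 \<bullet> r1 = 0" "s0 \<bullet> r1 = 0"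
    "r0 \<bullet> s1 = 0" "s0 \<bullet> s1 = 0"
    using o1 by (auto simp: inner_commute)
  have nz: "om p q p q \<noteq> 0" using om_self_zero ind(1) by blast
  have "wedge22 (om p q) (om r s) p q r1 s1 = 0" using w inV r1V s1V by blast
  then have "om p q p q * om r s r1 s1 = 0"
    by (simp add: wedge22_def om_def o1 o2)
  then have "om r s r1 s1 = 0" using nz by simp
  then have "om r1 s1 r1 s1 = 0"
    by (simp add: om_def r(3) s(3) inner_add_left o1 o2)
  then obtain c d where cd: "c *\<^sub>R r1 + d *\<^sub>R s1 = 0" "c \<noteq> 0 \<or> d \<noteq> 0"
    using om_self_zero unfolding indep2_def by blast
  define z where "z = c *\<^sub>R r + d *\<^sub>R s"
  have "z = c *\<^sub>R r0 + d *\<^sub>R s0 + (c *\<^sub>R r1 + d *\<^sub>R s1)"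
    by (simp add: z_def r(3) s(3) algebra_simps)
  then have "z = c *\<^sub>R r0 + d *\<^sub>R s0" using cd by simp
  then have "z \<in> span {p,q}" using r(1) s(1) by (simp add: span_add span_scale)
  moreover have "z \<noteq> 0" using ind(2) cd(2) unfolding indep2_def z_def by blast
  moreover have "z \<in> span {r,s}" unfolding z_def span2 by blast
  ultimately show ?thesis by blast
qed

lemma span3: "x \<in> span {a, b, c} \<longleftrightarrow> (\<exists>p q r. x = p *\<^sub>R a + q *\<^sub>R b + r *\<^sub>R c)"
proof
  assume "x \<in> span {a, b, c}"
  then obtain k where "x - k *\<^sub>R a \<in> span {b, c}" by (auto simp: span_insert[of a])
  then obtain q r where "x - k *\<^sub>R a = q *\<^sub>R b + r *\<^sub>R c" by (auto simp: span2)
  then have "x = k *\<^sub>R a + q *\<^sub>R b + r *\<^sub>R c" by (simp add: algebra_simps)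
  then show "\<exists>p q r. x = p *\<^sub>R a + q *\<^sub>R b + r *\<^sub>R c" by blast
next
  assume "\<exists>p q r. x = p *\<^sub>R a + q *\<^sub>R b + r *\<^sub>R c"
  then obtain p q r where x: "x = p *\<^sub>R a + q *\<^sub>R b + r *\<^sub>R c" by blast
  have "x - p *\<^sub>R a \<in> span {b, c}" unfolding span2 x by auto
  then show "x \<in> span {a, b, c}" by (auto simp: span_insert[of a])
qed

lemma dim2:
  fixes p q :: "'a::euclidean_space"
  assumes "indep2 p q" shows "dim (span {p, q}) = 2"
proof -
  have pq: "p \<noteq> q"
  proof
    assume "p = q" then have "1 *\<^sub>R p + (-1) *\<^sub>R q = 0" by simp
    then show False using assms unfolding indep2_def by fastforce
  qed
  have "independent {p, q}"
  proof
    assume "dependent {p,q}"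
    then obtain x where x: "x \<in> {p,q}" "x \<in> span ({p,q} - {x})" unfolding dependent_def by blast
    show False
    proof (cases "x = p")
      case True
      then have "p \<in> span {q}" using x pq by (simp add: insert_Diff_if)
      then obtain k where "p = k *\<^sub>R q" by (auto simp: span_singleton)
      then have "1 *\<^sub>R p + (- k) *\<^sub>R q = 0" by simp
      then show False using assms unfolding indep2_def by fastforce
    next
      case False
      then have "x = q" using x by auto
      then have "q \<in> span {p}" using x pq by (simp add: insert_Diff_if)
      then obtain k where "q = k *\<^sub>R p" by (auto simp: span_singleton)
      then have "(- k) *\<^sub>R p + 1 *\<^sub>R q = 0" by simp
      then show False using assms unfolding indep2_def by fastforce
    qed
  qed
  then show ?thesis using pq by (simp add: dim_eq_card_independent)
qed

lemma dim3:
  fixes a b c :: "'a::euclidean_space"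
  assumes h: "\<forall>p q r. p *\<^sub>R a + q *\<^sub>R b + r *\<^sub>R c = 0 \<longrightarrow> p = 0 \<and> q = 0 \<and> r = 0"
  shows "dim (span {a, b, c}) = 3"
proof -
  have ab: "a \<noteq> b" using h[rule_format, of 1 "-1" 0] by auto
  have ac: "a \<noteq> c" using h[rule_format, of 1 0 "-1"] by auto
  have bc: "b \<noteq> c" using h[rule_format, of 0 1 "-1"] by auto
  have "independent {a, b, c}"
  proof
    assume "dependent {a,b,c}"
    then obtain x where x: "x \<in> {a,b,c}" "x \<in> span ({a,b,c} - {x})" unfolding dependent_def by blast
    consider "x = a" | "x = b" | "x = c" using x by auto
    then show False
    proof cases
      case 1
      then have "a \<in> span {b, c}" using x ab ac bc by (simp add: insert_Diff_if insert_commute)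
      then obtain k l where "a = k *\<^sub>R b + l *\<^sub>R c" by (auto simp: span2)
      then have "1 *\<^sub>R a + (- k) *\<^sub>R b + (- l) *\<^sub>R c = 0" by simp
      then show False using h by fastforce
    next
      case 2
      then have "b \<in> span {a, c}" using x ab ac bc by (simp add: insert_Diff_if insert_commute)
      then obtain k l where "b = k *\<^sub>R a + l *\<^sub>R c" by (auto simp: span2)
      then have "(- k) *\<^sub>R a + 1 *\<^sub>R b + (- l) *\<^sub>R c = 0" by simp
      then show False using h by fastforce
    next
      case 3
      then have "c \<in> span {a, b}" using x ab ac bc by (simp add: insert_Diff_if insert_commute)
      then obtain k l where "c = k *\<^sub>R a + l *\<^sub>R b" by (auto simp: span2)
      then have "(- k) *\<^sub>R a + (- l) *\<^sub>R b + 1 *\<^sub>R c = 0" by simp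
      then show False using h by fastforce
    qed
  qed
  then show ?thesis using ab ac bc by (simp add: dim_eq_card_independent)
qed

definition sc :: "real \<Rightarrow> ('a \<Rightarrow> 'a \<Rightarrow> real) \<Rightarrow> ('a \<Rightarrow> 'a \<Rightarrow> real)" where
  "sc c \<omega> = (\<lambda>X Y. c * \<omega> X Y)"

lemma sc_apply[simp]: "sc c \<omega> X Y = c * \<omega> X Y" by (simp add: sc_def)

lemma sc_lam: "(\<lambda>c \<omega>. (\<lambda>X Y. c * \<omega> X Y)) = sc" by (intro ext) (simp add: sc_def)

interpretation F: vector_space "sc :: real \<Rightarrow> ('a \<Rightarrow> 'a \<Rightarrow> real) \<Rightarrow> _"
  by unfold_locales (auto simp: fun_eq_iff sc_def algebra_simps)

lemma dim_forms2_F: "dim_forms2 W = F.dim W"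
  unfolding dim_forms2_def sc_lam ..

lemma NtH_app: "NtH br V \<xi> x y = (if x \<in> V \<and> y \<in> V then - \<xi> (br x y) else 0)"
  by (simp add: NtH_def restrict2_def CE_d_def)

lemma W_subspace: "F.subspace (NtH br V ` annihilator V)"
  unfolding F.subspace_def
proof (intro conjI ballI allI)
  have "(\<lambda>x. 0::real) \<in> annihilator V" unfolding annihilator_def by (auto intro: linearI)
  moreover have "NtH br V (\<lambda>x. 0) = 0" by (simp add: fun_eq_iff NtH_app)
  ultimately show "0 \<in> NtH br V ` annihilator V" by (metis image_eqI)
next
  fix \<eta> \<mu> assume "\<eta> \<in> NtH br V ` annihilator V" "\<mu> \<in> NtH br V ` annihilator V"
  then obtain \<xi> \<zeta> where h: "\<xi> \<in> annihilator V" "\<zeta> \<in> annihilator V" "\<eta> = NtH br V \<xi>" "\<mu> = NtH br V \<zeta>"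
    by blast
  have "(\<lambda>x. \<xi> x + \<zeta> x) \<in> annihilator V" using h(1,2) unfolding annihilator_def
    by (auto intro!: linearI simp: linear_add linear_scale algebra_simps)
  moreover have "NtH br V (\<lambda>x. \<xi> x + \<zeta> x) = \<eta> + \<mu>" by (simp add: fun_eq_iff NtH_app h)
  ultimately show "\<eta> + \<mu> \<in> NtH br V ` annihilator V" by (metis image_eqI)
next
  fix c \<eta> assume "\<eta> \<in> NtH br V ` annihilator V"
  then obtain \<xi> where h: "\<xi> \<in> annihilator V" "\<eta> = NtH br V \<xi>" by blast
  have "(\<lambda>x. c * \<xi> x) \<in> annihilator V" using h(1) unfolding annihilator_def
    by (auto intro!: linearI simp: linear_add linear_scale algebra_simps)
  moreover have "NtH br V (\<lambda>x. c * \<xi> x) = sc c \<eta>" by (simp add: fun_eq_iff NtH_app h)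
  ultimately show "sc c \<eta> \<in> NtH br V ` annihilator V" by (metis image_eqI)
qed

lemma rep:
  fixes br :: "'a::euclidean_space \<Rightarrow> 'a \<Rightarrow> 'a"
  assumes bl: "bilinear br" and V: "subspace V" and \<xi>: "\<xi> \<in> annihilator V"
    and nz: "NtH br V \<xi> \<noteq> 0"
    and simp1: "\<forall>a\<in>V. \<forall>b\<in>V. \<forall>c\<in>V. \<forall>d\<in>V. wedge22 (NtH br V \<xi>) (NtH br V \<xi>) a b c d = 0"
  shows "\<exists>p\<in>V. \<exists>q\<in>V. indep2 p q \<and> (\<forall>x\<in>V. \<forall>y\<in>V. NtH br V \<xi> x y = om p q x y)"
proof -
  have l: "linear \<xi>" using \<xi> unfolding annihilator_def by auto
  define f where "f = (\<lambda>x y. - \<xi> (br x y))"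
  have fb: "bilinear f" unfolding bilinear_def f_def
    using l bl by (auto intro!: linearI simp: bilinear_ladd bilinear_radd bilinear_lmul bilinear_rmul linear_add linear_scale)
  have eq: "NtH br V \<xi> x y = f x y" if "x \<in> V" "y \<in> V" for x y using that by (simp add: NtH_app f_def)
  have w: "\<forall>a\<in>V. \<forall>b\<in>V. \<forall>c\<in>V. \<forall>d\<in>V. wedge22 f f a b c d = 0"
    using simp1 by (simp add: wedge22_def eq)
  obtain a b where ab: "a \<in> V" "b \<in> V" "NtH br V \<xi> a b \<noteq> 0"
    using nz by (auto simp: fun_eq_iff NtH_app split: if_splits)
  obtain p q where pq: "p \<in> V" "q \<in> V" "\<forall>x\<in>V. \<forall>y\<in>V. f x y = om p q x y"
    using decomp[OF fb V w ab(1,2)] ab eq by auto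
  have "indep2 p q"
  proof (rule ccontr)
    assume "\<not> indep2 p q"
    then have "NtH br V \<xi> a b = 0" using om_dep pq ab eq by metis
    then show False using ab by simp
  qed
  then show ?thesis using pq eq by auto
qed

lemma geom:
  fixes p1 q1 p2 q2 p3 q3 :: "'a::euclidean_space"
  assumes V: "subspace V" and inV: "p1 \<in> V" "q1 \<in> V" "p2 \<in> V" "q2 \<in> V"
    and i1: "indep2 p1 q1" and i2: "indep2 p2 q2" and i3: "indep2 p3 q3"
    and ne12: "\<not> (p2 \<in> span {p1,q1} \<and> q2 \<in> span {p1,q1})"
    and z12: "\<exists>z. z \<noteq> 0 \<and> z \<in> span {p1,q1} \<and> z \<in> span {p2,q2}"
    and z13: "\<exists>z. z \<noteq> 0 \<and> z \<in> span {p1,q1} \<and> z \<in> span {p3,q3}"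
    and z23: "\<exists>z. z \<noteq> 0 \<and> z \<in> span {p2,q2} \<and> z \<in> span {p3,q3}"
    and nc: "\<forall>z. z \<in> span {p1,q1} \<and> z \<in> span {p2,q2} \<and> z \<in> span {p3,q3} \<longrightarrow> z = 0"
  shows "\<exists>u1 u2 u3. u1 \<in> V \<and> u2 \<in> V \<and> u3 \<in> V \<and>
     u1 \<bullet> u1 = 1 \<and> u2 \<bullet> u2 = 1 \<and> u3 \<bullet> u3 = 1 \<and> u1 \<bullet> u2 = 0 \<and> u1 \<bullet> u3 = 0 \<and> u2 \<bullet> u3 = 0 \<and>
     {p1,q1,p2,q2,p3,q3} \<subseteq> span {u1,u2,u3}"
proof -
  define P1 where "P1 = span {p1,q1}"
  define P2 where "P2 = span {p2,q2}"
  define P3 where "P3 = span {p3,q3}"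
  have d1: "dim P1 = 2" "dim P2 = 2" "dim P3 = 2" unfolding P1_def P2_def P3_def using dim2 i1 i2 i3 by auto
  have s: "subspace P1" "subspace P2" "subspace P3" unfolding P1_def P2_def P3_def by auto
  define U where "U = span ({p1,q1} \<union> {p2,q2})"
  have Ueq: "U = {x + y |x y. x \<in> P1 \<and> y \<in> P2}" unfolding U_def P1_def P2_def by (rule span_Un)
  have sU: "subspace U" unfolding U_def by simp
  have P1U: "P1 \<subseteq> U" unfolding U_def P1_def by (rule span_mono) auto
  have P2U: "P2 \<subseteq> U" unfolding U_def P2_def by (rule span_mono) auto
  have UV: "U \<subseteq> V" unfolding U_def using inV V by (simp add: span_minimal)
  have dsum: "dim U + dim (P1 \<inter> P2) = 4"
    using dim_sums_Int[OF s(1) s(2)] d1 Ueq by simp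
  have dint1: "dim (P1 \<inter> P2) \<noteq> 0"
    using z12 unfolding P1_def P2_def by (auto simp: dim_eq_0)
  have dint2: "dim (P1 \<inter> P2) \<noteq> 2"
  proof
    assume h: "dim (P1 \<inter> P2) = 2"
    have "P1 \<inter> P2 = P1" by (rule subspace_dim_equal) (use s h d1 in \<open>auto intro: subspace_inter\<close>)
    then have "P1 \<subseteq> P2" by blast
    then have "P1 = P2" using subspace_dim_equal[OF s(1) s(2)] d1 by auto
    then show False using ne12 unfolding P1_def P2_def by (auto intro: span_base)
  qed
  have dint3: "dim (P1 \<inter> P2) \<le> 2"
    using dim_subset[of "P1 \<inter> P2" P1] d1 by auto
  have dU: "dim U = 3" using dsum dint1 dint2 dint3 by linarith
  obtain x where x: "x \<noteq> 0" "x \<in> P1" "x \<in> P3" using z13 unfolding P1_def P3_def by blast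
  obtain y where y: "y \<noteq> 0" "y \<in> P2" "y \<in> P3" using z23 unfolding P2_def P3_def by blast
  have P3U: "P3 \<subseteq> U"
  proof (cases "indep2 x y")
    case True
    have "span {x,y} \<subseteq> P3" using x y s(3) by (simp add: span_minimal)
    then have "span {x,y} = P3" using subspace_dim_equal[OF subspace_span s(3)] dim2[OF True] d1 by auto
    moreover have "span {x,y} \<subseteq> U" using x y P1U P2U by (intro span_minimal[OF _ sU]) auto
    ultimately show ?thesis by simp
  next
    case False
    then obtain c d where cd: "c *\<^sub>R x + d *\<^sub>R y = 0" "c \<noteq> 0 \<or> d \<noteq> 0" unfolding indep2_def by blast
    have c: "c \<noteq> 0" using cd y(1) by auto
    have e: "c *\<^sub>R x = - (d *\<^sub>R y)" using cd(1) by (simp add: eq_neg_iff_add_eq_0)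
    have "x = (1/c) *\<^sub>R (c *\<^sub>R x)" using c by simp
    also have "\<dots> = (1/c) *\<^sub>R (- (d *\<^sub>R y))" using e by simp
    finally have xe: "x = (1/c) *\<^sub>R (- (d *\<^sub>R y))" .
    have "(1/c) *\<^sub>R (- (d *\<^sub>R y)) \<in> P2"
      by (intro subspace_scale[OF s(2)] subspace_neg[OF s(2)] y(2))
    then have "x \<in> P2" using xe by simp
    then have "x = 0" using nc x unfolding P1_def P2_def P3_def by blast
    then show ?thesis using x(1) by simp
  qed
  obtain B :: "'a set" where B: "B \<subseteq> U" "pairwise orthogonal B" "\<And>x. x \<in> B \<Longrightarrow> norm x = 1"
    "independent B" "card B = dim U" "span B = U"
    using orthonormal_basis_subspace[OF sU] by metis
  have "\<exists>u1 u2 u3. B = {u1,u2,u3} \<and> u1 \<noteq> u2 \<and> u2 \<noteq> u3 \<and> u1 \<noteq> u3"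
    using B(5) dU by (simp add: card_3_iff)
  then obtain u1 u2 u3 where u: "B = {u1,u2,u3}" "u1 \<noteq> u2" "u2 \<noteq> u3" "u1 \<noteq> u3" by blast
  have uV: "u1 \<in> V" "u2 \<in> V" "u3 \<in> V" using B(1) UV u(1) by auto
  have n: "u1 \<bullet> u1 = 1" "u2 \<bullet> u2 = 1" "u3 \<bullet> u3 = 1"
    using B(3) u(1) by (auto simp: dot_square_norm)
  have o: "u1 \<bullet> u2 = 0" "u1 \<bullet> u3 = 0" "u2 \<bullet> u3 = 0"
    using B(2) u unfolding pairwise_def orthogonal_def by auto
  have "{p1,q1,p2,q2,p3,q3} \<subseteq> U"
    using P1U P2U P3U unfolding P1_def P2_def P3_def by (auto intro: span_base)
  then have "{p1,q1,p2,q2,p3,q3} \<subseteq> span {u1,u2,u3}" using B(6) u(1) by simp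
  then show ?thesis using uV n o by blast
qed

lemma construct_Psi:
  fixes br :: "'a::euclidean_space \<Rightarrow> 'a \<Rightarrow> 'a"
  assumes sV: "subspace V" and dV: "dim V = n" and dg: "DIM('a) = 2*n"
    and uV: "u1 \<in> V" "u2 \<in> V" "u3 \<in> V"
    and on: "u1 \<bullet> u1 = 1" "u2 \<bullet> u2 = 1" "u3 \<bullet> u3 = 1" "u1 \<bullet> u2 = 0" "u1 \<bullet> u3 = 0" "u2 \<bullet> u3 = 0"
    and kp: "\<forall>v\<in>V. k1 \<bullet> v = 0" "\<forall>v\<in>V. k2 \<bullet> v = 0" "\<forall>v\<in>V. k3 \<bullet> v = 0"
    and kb: "\<forall>x\<in>V. \<forall>y\<in>V. k1 \<bullet> br x y = - om u2 u3 x y"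
            "\<forall>x\<in>V. \<forall>y\<in>V. k2 \<bullet> br x y = - om u3 u1 x y"
            "\<forall>x\<in>V. \<forall>y\<in>V. k3 \<bullet> br x y = - om u1 u2 x y"
    and surj: "\<forall>k. (\<forall>v\<in>V. k \<bullet> v = 0) \<longrightarrow> (\<exists>c1 c2 c3. \<forall>x\<in>V. \<forall>y\<in>V.
                 k \<bullet> br x y = - (c1 * om u2 u3 x y + c2 * om u3 u1 x y + c3 * om u1 u2 x y))"
  shows "\<exists>\<Psi>. linear \<Psi> \<and> (\<forall>z\<in>V. \<forall>v\<in>V. \<Psi> z \<bullet> v = 0) \<and>
           (\<forall>k. (\<forall>v\<in>V. k \<bullet> v = 0) \<longrightarrow> (\<exists>z\<in>V. \<Psi> z = k)) \<and> (\<forall>z\<in>V. \<Psi> z = 0 \<longrightarrow> z = 0) \<and>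
           (\<forall>X\<in>V. \<forall>Y\<in>V. \<forall>Z\<in>V. \<Psi> Z \<bullet> br X Y =
              - ((u1 \<bullet> Z) * om u2 u3 X Y + (u2 \<bullet> Z) * om u3 u1 X Y + (u3 \<bullet> Z) * om u1 u2 X Y))"
proof -
  have on': "u2 \<bullet> u1 = 0" "u3 \<bullet> u1 = 0" "u3 \<bullet> u2 = 0" using on by (auto simp: inner_commute)
  define Vp where "Vp = {y \<in> UNIV. \<forall>x\<in>V. orthogonal x y}"
  have Vp_iff: "k \<in> Vp \<longleftrightarrow> (\<forall>v\<in>V. k \<bullet> v = 0)" for k
    unfolding Vp_def orthogonal_def by (auto simp: inner_commute)
  have sVp: "subspace Vp" unfolding subspace_def by (auto simp: Vp_iff inner_add_left)
  have dVp: "dim Vp = n"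
    using dim_subspace_orthogonal_to_vectors[OF sV subspace_UNIV subset_UNIV] dV dg
    unfolding Vp_def by (simp add: dim_UNIV)
  define K where "K = {k \<in> Vp. \<forall>x\<in>V. \<forall>y\<in>V. k \<bullet> br x y = 0}"
  have sK: "subspace K" using sVp unfolding subspace_def K_def by (auto simp: inner_add_left)
  have KVp: "K \<subseteq> Vp" unfolding K_def by auto
  have kVp: "k1 \<in> Vp" "k2 \<in> Vp" "k3 \<in> Vp" using kp Vp_iff by auto
  have comb: "(c1 *\<^sub>R k1 + c2 *\<^sub>R k2 + c3 *\<^sub>R k3) \<bullet> br x y =
      - (c1 * om u2 u3 x y + c2 * om u3 u1 x y + c3 * om u1 u2 x y)" if "x \<in> V" "y \<in> V" for c1 c2 c3 x y
    using kb that by (simp add: inner_add_left algebra_simps)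
  have kk: "c1 = 0 \<and> c2 = 0 \<and> c3 = 0"
    if h: "\<forall>x\<in>V. \<forall>y\<in>V. (c1 *\<^sub>R k1 + c2 *\<^sub>R k2 + c3 *\<^sub>R k3) \<bullet> br x y = 0" for c1 c2 c3
  proof -
    have "(c1 *\<^sub>R k1 + c2 *\<^sub>R k2 + c3 *\<^sub>R k3) \<bullet> br u2 u3 = 0" using h uV by blast
    then have "- (c1 * om u2 u3 u2 u3 + c2 * om u3 u1 u2 u3 + c3 * om u1 u2 u2 u3) = 0"
      using comb[OF uV(2) uV(3)] by simp
    then have 1: "c1 = 0" by (simp add: om_def on on')
    have "(c1 *\<^sub>R k1 + c2 *\<^sub>R k2 + c3 *\<^sub>R k3) \<bullet> br u3 u1 = 0" using h uV by blast
    then have "- (c1 * om u2 u3 u3 u1 + c2 * om u3 u1 u3 u1 + c3 * om u1 u2 u3 u1) = 0"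
      using comb[OF uV(3) uV(1)] by simp
    then have 2: "c2 = 0" by (simp add: om_def on on')
    have "(c1 *\<^sub>R k1 + c2 *\<^sub>R k2 + c3 *\<^sub>R k3) \<bullet> br u1 u2 = 0" using h uV by blast
    then have "- (c1 * om u2 u3 u1 u2 + c2 * om u3 u1 u1 u2 + c3 * om u1 u2 u1 u2) = 0"
      using comb[OF uV(1) uV(2)] by simp
    then have 3: "c3 = 0" by (simp add: om_def on on')
    show ?thesis using 1 2 3 by simp
  qed
  define T where "T = span {k1, k2, k3}"
  have dT: "dim T = 3" unfolding T_def
  proof (rule dim3, intro allI impI)
    fix p q r assume "p *\<^sub>R k1 + q *\<^sub>R k2 + r *\<^sub>R k3 = 0"
    then show "p = 0 \<and> q = 0 \<and> r = 0" using kk[of p q r] by simp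
  qed
  have TVp: "T \<subseteq> Vp" unfolding T_def using kVp sVp by (simp add: span_minimal)
  have sum: "{x + y |x y. x \<in> K \<and> y \<in> T} = Vp"
  proof
    show "{x + y |x y. x \<in> K \<and> y \<in> T} \<subseteq> Vp" using KVp TVp sVp by (auto intro: subspace_add)
    show "Vp \<subseteq> {x + y |x y. x \<in> K \<and> y \<in> T}"
    proof
      fix k assume k: "k \<in> Vp"
      then obtain c1 c2 c3 where c: "\<forall>x\<in>V. \<forall>y\<in>V.
                 k \<bullet> br x y = - (c1 * om u2 u3 x y + c2 * om u3 u1 x y + c3 * om u1 u2 x y)"
        using surj Vp_iff by blast
      define t where "t = c1 *\<^sub>R k1 + c2 *\<^sub>R k2 + c3 *\<^sub>R k3"
      have tT: "t \<in> T" unfolding T_def t_def span3 by blast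
      have "k - t \<in> K" unfolding K_def
        using k tT TVp sVp c comb unfolding t_def by (auto simp: subspace_diff inner_diff_left)
      then show "k \<in> {x + y |x y. x \<in> K \<and> y \<in> T}" using tT by force
    qed
  qed
  have int: "K \<inter> T \<subseteq> {0}"
  proof
    fix x assume x: "x \<in> K \<inter> T"
    then have "x \<in> span {k1, k2, k3}" unfolding T_def by blast
    then obtain c1 c2 c3 where xc: "x = c1 *\<^sub>R k1 + c2 *\<^sub>R k2 + c3 *\<^sub>R k3" unfolding span3 by blast
    have "c1 = 0 \<and> c2 = 0 \<and> c3 = 0" using x unfolding K_def xc by (intro kk) auto
    then show "x \<in> {0}" using xc by simp
  qed
  have d0: "dim (K \<inter> T) = 0" using int by simp
  have dK: "dim K + 3 = n"
    using dim_sums_Int[OF sK subspace_span[of "{k1,k2,k3}"]] sum int dVp dT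
    using d0 unfolding T_def by simp
  define U where "U = span {u1, u2, u3}"
  have dU: "dim U = 3" unfolding U_def
  proof (rule dim3, intro allI impI)
    fix p q r assume h: "p *\<^sub>R u1 + q *\<^sub>R u2 + r *\<^sub>R u3 = 0"
    have "u1 \<bullet> (p *\<^sub>R u1 + q *\<^sub>R u2 + r *\<^sub>R u3) = 0" "u2 \<bullet> (p *\<^sub>R u1 + q *\<^sub>R u2 + r *\<^sub>R u3) = 0"
      "u3 \<bullet> (p *\<^sub>R u1 + q *\<^sub>R u2 + r *\<^sub>R u3) = 0" using h by auto
    then show "p = 0 \<and> q = 0 \<and> r = 0" by (simp add: inner_add_right on on')
  qed
  have UV: "U \<subseteq> V" unfolding U_def using uV sV by (simp add: span_minimal)
  define V0 where "V0 = {y \<in> V. \<forall>x\<in>U. orthogonal x y}"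
  have dV0: "dim V0 + 3 = n"
    using dim_subspace_orthogonal_to_vectors[OF subspace_span sV UV[unfolded U_def]] dU dV
    unfolding V0_def U_def by simp
  have sV0: "subspace V0" using sV unfolding subspace_def V0_def orthogonal_def
    by (auto simp: inner_add_right)
  have dd: "dim V0 = dim K" using dV0 dK by simp
  obtain \<Phi> :: "'a \<Rightarrow> 'a" where \<Phi>: "linear \<Phi>" "linear \<Phi>" "\<Phi> ` V0 = K" "\<Phi> ` V0 = K" "\<And>x. x \<in> V0 \<Longrightarrow> norm (\<Phi> x) = norm x"
    using isometries_subspaces[OF sV0 sK dd] by metis
  define pr where "pr z = (u1 \<bullet> z) *\<^sub>R u1 + (u2 \<bullet> z) *\<^sub>R u2 + (u3 \<bullet> z) *\<^sub>R u3" for z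
  have V0mem: "z - pr z \<in> V0" if z: "z \<in> V" for z
  proof -
    have "pr z \<in> V" unfolding pr_def by (intro subspace_add[OF sV] subspace_scale[OF sV] uV)
    then have "z - pr z \<in> V" using z sV by (simp add: subspace_diff)
    moreover have "orthogonal x (z - pr z)" if xU: "x \<in> U" for x
    proof -
      obtain a b c where x: "x = a *\<^sub>R u1 + b *\<^sub>R u2 + c *\<^sub>R u3" using xU unfolding U_def span3 by blast
      have xz: "x \<bullet> z = a*(u1 \<bullet> z) + b*(u2 \<bullet> z) + c*(u3 \<bullet> z)" by (simp add: x inner_add_left)
      have xu: "x \<bullet> u1 = a" "x \<bullet> u2 = b" "x \<bullet> u3 = c" by (simp_all add: x inner_add_left on on')
      have xp: "x \<bullet> pr z = (u1 \<bullet> z)*(x \<bullet> u1) + (u2 \<bullet> z)*(x \<bullet> u2) + (u3 \<bullet> z)*(x \<bullet> u3)"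
        by (simp add: pr_def inner_add_right)
      show ?thesis unfolding orthogonal_def inner_diff_right xz xp xu by (simp add: mult.commute)
    qed
    ultimately show ?thesis unfolding V0_def by blast
  qed
  define \<Psi> where "\<Psi> z = (u1 \<bullet> z) *\<^sub>R k1 + (u2 \<bullet> z) *\<^sub>R k2 + (u3 \<bullet> z) *\<^sub>R k3 + \<Phi> (z - pr z)" for z
  have lpr: "linear pr"
  proof (rule linearI)
    fix x y :: 'a and r :: real
    show "pr (x + y) = pr x + pr y" unfolding pr_def by (simp add: inner_add_right scaleR_add_left add_ac)
    show "pr (r *\<^sub>R x) = r *\<^sub>R pr x" unfolding pr_def by (simp add: scaleR_add_right)
  qed
  have lPsi: "linear \<Psi>"
  proof -
    have a: "\<Phi> (a + b - pr (a + b)) = \<Phi> (a - pr a) + \<Phi> (b - pr b)" for a b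
    proof -
      have e: "a + b - pr (a + b) = (a - pr a) + (b - pr b)" by (simp add: linear_add[OF lpr] algebra_simps)
      have "\<Phi> (a + b - pr (a + b)) = \<Phi> ((a - pr a) + (b - pr b))" by (simp only: e)
      also have "\<dots> = \<Phi> (a - pr a) + \<Phi> (b - pr b)" by (rule linear_add[OF \<Phi>(1)])
      finally show ?thesis .
    qed
    have s: "\<Phi> (r *\<^sub>R a - pr (r *\<^sub>R a)) = r *\<^sub>R \<Phi> (a - pr a)" for r a
    proof -
      have e: "r *\<^sub>R a - pr (r *\<^sub>R a) = r *\<^sub>R (a - pr a)" by (simp add: linear_scale[OF lpr] scaleR_diff_right)
      have "\<Phi> (r *\<^sub>R a - pr (r *\<^sub>R a)) = \<Phi> (r *\<^sub>R (a - pr a))" by (simp only: e)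
      also have "\<dots> = r *\<^sub>R \<Phi> (a - pr a)" by (rule linear_scale[OF \<Phi>(1)])
      finally show ?thesis .
    qed
    show ?thesis
    proof (rule linearI)
      fix x y :: 'a and r :: real
      show "\<Psi> (x + y) = \<Psi> x + \<Psi> y" unfolding \<Psi>_def a
        by (simp add: inner_add_right scaleR_add_left)
      show "\<Psi> (r *\<^sub>R x) = r *\<^sub>R \<Psi> x" unfolding \<Psi>_def s
        by (simp add: scaleR_add_right)
    qed
  qed
  have PhiK: "\<Phi> (z - pr z) \<in> K" if "z \<in> V" for z using V0mem[OF that] \<Phi>(3) by blast
  have into: "\<forall>z\<in>V. \<forall>v\<in>V. \<Psi> z \<bullet> v = 0"
  proof (intro ballI)
    fix z v assume "z \<in> V" "v \<in> V"
    moreover have "\<Phi> (z - pr z) \<bullet> v = 0" using PhiK[OF \<open>z \<in> V\<close>] KVp Vp_iff \<open>v \<in> V\<close> by blast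
    ultimately show "\<Psi> z \<bullet> v = 0" unfolding \<Psi>_def using kp by (simp add: inner_add_left)
  qed
  have formula: "\<Psi> Z \<bullet> br X Y =
              - ((u1 \<bullet> Z) * om u2 u3 X Y + (u2 \<bullet> Z) * om u3 u1 X Y + (u3 \<bullet> Z) * om u1 u2 X Y)"
    if "X \<in> V" "Y \<in> V" "Z \<in> V" for X Y Z
  proof -
    have "\<Phi> (Z - pr Z) \<bullet> br X Y = 0" using PhiK[OF that(3)] that unfolding K_def by blast
    then show ?thesis unfolding \<Psi>_def using comb[OF that(1,2)] by (simp add: inner_add_left)
  qed
  have inj: "\<forall>z\<in>V. \<Psi> z = 0 \<longrightarrow> z = 0"
  proof (intro ballI impI)
    fix z assume z: "z \<in> V" "\<Psi> z = 0"
    have "\<forall>x\<in>V. \<forall>y\<in>V. ((u1 \<bullet> z) *\<^sub>R k1 + (u2 \<bullet> z) *\<^sub>R k2 + (u3 \<bullet> z) *\<^sub>R k3) \<bullet> br x y = 0"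
    proof (intro ballI)
      fix x y assume xy: "x \<in> V" "y \<in> V"
      have "\<Psi> z \<bullet> br x y = 0" using z(2) by simp
      then show "((u1 \<bullet> z) *\<^sub>R k1 + (u2 \<bullet> z) *\<^sub>R k2 + (u3 \<bullet> z) *\<^sub>R k3) \<bullet> br x y = 0"
        using formula[OF xy z(1)] comb[OF xy] by simp
    qed
    then have c: "u1 \<bullet> z = 0 \<and> u2 \<bullet> z = 0 \<and> u3 \<bullet> z = 0" by (rule kk)
    then have "pr z = 0" unfolding pr_def by simp
    then have "\<Phi> z = 0" using z(2) c unfolding \<Psi>_def by simp
    then have "norm z = 0" using \<Phi>(5)[OF V0mem[OF z(1)]] \<open>pr z = 0\<close> by simp
    then show "z = 0" by simp
  qed
  have onto: "\<forall>k. (\<forall>v\<in>V. k \<bullet> v = 0) \<longrightarrow> (\<exists>z\<in>V. \<Psi> z = k)"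
  proof (intro allI impI)
    fix k assume kV: "\<forall>v\<in>V. k \<bullet> v = 0"
    then have k: "k \<in> Vp" using Vp_iff by blast
    obtain c1 c2 c3 where c: "\<forall>x\<in>V. \<forall>y\<in>V.
                 k \<bullet> br x y = - (c1 * om u2 u3 x y + c2 * om u3 u1 x y + c3 * om u1 u2 x y)"
      using surj kV by blast
    define t where "t = c1 *\<^sub>R k1 + c2 *\<^sub>R k2 + c3 *\<^sub>R k3"
    have tT: "t \<in> T" unfolding T_def t_def span3 by blast
    have "k - t \<in> K" unfolding K_def
      using k tT TVp sVp c comb unfolding t_def by (auto simp: subspace_diff inner_diff_left)
    then have "k - t \<in> \<Phi> ` V0" using \<Phi>(3) by simp
    then obtain z0 where z0': "k - t = \<Phi> z0" "z0 \<in> V0" by (rule imageE)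
    then have z0: "z0 \<in> V0" "\<Phi> z0 = k - t" by auto
    define z where "z = c1 *\<^sub>R u1 + c2 *\<^sub>R u2 + c3 *\<^sub>R u3 + z0"
    have z0V: "z0 \<in> V" using z0 unfolding V0_def by auto
    have uU: "u1 \<in> U" "u2 \<in> U" "u3 \<in> U" unfolding U_def by (auto intro: span_base)
    have z0o: "u1 \<bullet> z0 = 0" "u2 \<bullet> z0 = 0" "u3 \<bullet> z0 = 0"
      using z0(1) uU unfolding V0_def orthogonal_def by auto
    have zV: "z \<in> V" unfolding z_def using uV z0V sV by (auto intro!: subspace_add subspace_scale)
    have cz: "u1 \<bullet> z = c1" "u2 \<bullet> z = c2" "u3 \<bullet> z = c3"
      unfolding z_def by (simp_all add: inner_add_right on on' z0o)
    have "z - pr z = z0" unfolding pr_def cz unfolding z_def by simp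
    then have "\<Psi> z = k" unfolding \<Psi>_def cz using z0(2) t_def by simp
    then show "\<exists>z\<in>V. \<Psi> z = k" using zV by blast
  qed
  show ?thesis using lPsi into onto inj formula by blast
qed

lemma pV_ex:
  assumes c: "complementary V H"
  shows "\<exists>!v. v \<in> V \<and> x - v \<in> H"
proof -
  obtain v h where vh: "v \<in> V" "h \<in> H" "x = v + h" using c unfolding complementary_def by blast
  show ?thesis
  proof (rule ex1I[of _ v])
    show "v \<in> V \<and> x - v \<in> H" using vh by simp
    fix v' assume v': "v' \<in> V \<and> x - v' \<in> H"
    have vV: "v' - v \<in> V" using v' vh c unfolding complementary_def by (simp add: subspace_diff)
    have sH': "subspace H" using c unfolding complementary_def by auto
    have "(x - v) - (x - v') \<in> H" by (rule subspace_diff[OF sH']) (use v' vh in auto)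
    then have "v' - v \<in> H" by (simp add: algebra_simps)
    with vV have "v' - v = 0" using c unfolding complementary_def by blast
    then show "v' = v" by simp
  qed
qed

definition pV :: "'a::real_vector set \<Rightarrow> 'a set \<Rightarrow> 'a \<Rightarrow> 'a" where
  "pV V H x = (THE v. v \<in> V \<and> x - v \<in> H)"

lemma pV_prop:
  assumes "complementary V H"
  shows "pV V H x \<in> V" "x - pV V H x \<in> H"
  using theI'[OF pV_ex[OF assms, of x]] unfolding pV_def by auto

lemma pV_uniq:
  assumes "complementary V H" "v \<in> V" "x - v \<in> H"
  shows "pV V H x = v"
  unfolding pV_def using pV_ex[OF assms(1), of x] assms(2,3) by (simp add: the1_equality)

lemma pV_linear:
  assumes c: "complementary V H"
  shows "linear (pV V H)"
proof (rule linearI)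
  have sV: "subspace V" and sH: "subspace H" using c unfolding complementary_def by auto
  fix x y :: 'a and r :: real
  show "pV V H (x + y) = pV V H x + pV V H y"
    apply (rule pV_uniq[OF c])
    using pV_prop[OF c] sV sH
     apply (simp add: subspace_add)
    using subspace_add[OF sH pV_prop(2)[OF c, of x] pV_prop(2)[OF c, of y]] by (simp add: algebra_simps)
  show "pV V H (r *\<^sub>R x) = r *\<^sub>R pV V H x"
    apply (rule pV_uniq[OF c])
    using pV_prop[OF c] sV sH
     apply (simp add: subspace_scale)
    using subspace_scale[OF sH pV_prop(2)[OF c, of x], of r] by (simp add: algebra_simps)
qed

lemma pV_V: "complementary V H \<Longrightarrow> v \<in> V \<Longrightarrow> pV V H v = v"
  by (rule pV_uniq) (auto simp: complementary_def subspace_0)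

lemma pV_H: "complementary V H \<Longrightarrow> h \<in> H \<Longrightarrow> pV V H h = 0"
  by (rule pV_uniq) (auto simp: complementary_def subspace_0)

lemma splitK_eq:
  assumes c: "complementary V H"
  shows "splitK V H x = pV V H x - (x - pV V H x)"
proof -
  have sV: "subspace V" and sH: "subspace H" and VH: "V \<inter> H = {0}" using c unfolding complementary_def by auto
  let ?v = "pV V H x"
  show ?thesis unfolding splitK_def
  proof (rule the_equality)
    show "\<exists>v\<in>V. \<exists>h\<in>H. x = v + h \<and> ?v - (x - ?v) = v - h"
      using pV_prop[OF c] by (rule_tac bexI[of _ ?v], rule_tac bexI[of _ "x - ?v"]) auto
    fix y assume "\<exists>v\<in>V. \<exists>h\<in>H. x = v + h \<and> y = v - h"
    then obtain v h where vh: "v\<in>V" "h\<in>H" "x = v + h" "y = v - h" by blast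
    have "?v = v" using pV_uniq[OF c vh(1)] vh by simp
    then show "y = ?v - (x - ?v)" using vh by simp
  qed
qed

lemma construct_g:
  fixes br :: "'a::euclidean_space \<Rightarrow> 'a \<Rightarrow> 'a" and \<Psi> :: "'a \<Rightarrow> 'a"
  assumes c: "complementary V H" and sub: "lie_subalgebra br H"
    and lin: "linear \<Psi>"
    and into: "\<And>z v. z \<in> V \<Longrightarrow> v \<in> V \<Longrightarrow> \<Psi> z \<bullet> v = 0"
    and onto: "\<And>k. (\<forall>v\<in>V. k \<bullet> v = 0) \<Longrightarrow> \<exists>z\<in>V. \<Psi> z = k"
    and inj: "\<And>z. z \<in> V \<Longrightarrow> \<Psi> z = 0 \<Longrightarrow> z = 0"
    and skew: "\<And>X Y Z. X\<in>V \<Longrightarrow> Y\<in>V \<Longrightarrow> Z\<in>V \<Longrightarrow>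
        \<Psi> Z \<bullet> br X Y = - (\<Psi> X \<bullet> br Z Y) \<and> \<Psi> Z \<bullet> br X Y = - (\<Psi> Y \<bullet> br X Z) \<and> \<Psi> Z \<bullet> br X Y = - (\<Psi> Z \<bullet> br Y X)"
  shows "\<exists>g. GL_structure_compatible V H g \<and> tau2_zero br V g \<and> tau56_zero br H g"
proof -
  have sV: "subspace V" and sH: "subspace H" and VH: "V \<inter> H = {0}"
    and dec: "\<forall>x. \<exists>v\<in>V. \<exists>h\<in>H. x = v + h" using c unfolding complementary_def by auto
  let ?p = "pV V H"
  have lp: "linear ?p" by (rule pV_linear[OF c])
  define g where "g = (\<lambda>X Y. \<Psi> (?p Y) \<bullet> X + \<Psi> (?p X) \<bullet> Y)"
  have lPp: "linear (\<lambda>x. \<Psi> (?p x))" using linear_compose[OF lp lin] by (simp add: o_def)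
  have Psi0: "\<Psi> 0 = 0" using lin by (simp add: linear_0)
  have bil: "bilinear g"
  proof -
    have a: "\<Psi> (?p (a+b)) = \<Psi> (?p a) + \<Psi> (?p b)" for a b using linear_add[OF lPp, of a b] by simp
    have s: "\<Psi> (?p (r *\<^sub>R a)) = r *\<^sub>R \<Psi> (?p a)" for r a using linear_scale[OF lPp, of r a] by simp
    show ?thesis unfolding bilinear_def g_def
      by (auto intro!: linearI simp: a s inner_add_left inner_add_right algebra_simps)
  qed
  have sym: "\<forall>X Y. g X Y = g Y X" unfolding g_def by simp
  have nd: "\<forall>X. (\<forall>Y. g X Y = 0) \<longrightarrow> X = 0"
  proof (intro allI impI)
    fix X assume h: "\<forall>Y. g X Y = 0"
    define m where "m = \<Psi> (?p X)"
    have mH: "m \<bullet> Y = 0" if "Y \<in> H" for Y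
      using h[rule_format, of Y] pV_H[OF c that] Psi0 unfolding g_def m_def by simp
    have mV: "m \<bullet> Y = 0" if "Y \<in> V" for Y
      unfolding m_def using into pV_prop(1)[OF c] that by blast
    have "m \<bullet> m = 0"
    proof -
      obtain v h where "v \<in> V" "h \<in> H" "m = v + h" using dec by blast
      then show ?thesis using mH mV by (simp add: inner_add_right)
    qed
    then have "m = 0" by simp
    then have pX: "?p X = 0" using inj pV_prop(1)[OF c] unfolding m_def by blast
    then have XH: "X \<in> H" using pV_prop(2)[OF c, of X] by simp
    have XPsi: "\<Psi> Y \<bullet> X = 0" if "Y \<in> V" for Y
      using h[rule_format, of Y] pV_V[OF c that] pX Psi0 unfolding g_def by simp
    obtain y z where yz: "y \<in> span V" "\<And>w. w \<in> span V \<Longrightarrow> orthogonal z w" "X = y + z"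
      using orthogonal_subspace_decomp_exists by metis
    have spV: "span V = V" by (rule span_eq_iff[THEN iffD2, OF sV])
    have yV: "y \<in> V" using yz(1) by (subst spV[symmetric])
    have "\<forall>v\<in>V. z \<bullet> v = 0" using yz(2) sV span_superset unfolding orthogonal_def by blast
    then obtain w where w: "w \<in> V" "\<Psi> w = z" using onto by blast
    have "X \<bullet> z = 0" using XPsi[OF w(1)] w(2) by (simp add: inner_commute)
    moreover have "y \<bullet> z = 0" using yz(2)[OF yz(1)] unfolding orthogonal_def by (simp add: inner_commute)
    ultimately have "z \<bullet> z = 0" using yz(3) by (simp add: inner_add_left)
    then have "X \<in> V" using yz(3) yV by simp
    then show "X = 0" using XH VH by blast
  qed
  have K: "g (splitK V H X) (splitK V H Y) = - g X Y" for X Y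
  proof -
    have pK: "?p (splitK V H Z) = ?p Z" for Z
      unfolding splitK_eq[OF c]
      apply (rule pV_uniq[OF c])
      using pV_prop[OF c, of Z] subspace_neg[OF sH pV_prop(2)[OF c, of Z]] by auto
    have o: "\<Psi> (?p A) \<bullet> ?p B = 0" for A B using into pV_prop(1)[OF c] by blast
    show ?thesis unfolding g_def pK unfolding splitK_eq[OF c]
      using o[of Y X] o[of X Y] by (simp add: inner_diff_right)
  qed
  have t2: "tau2_zero br V g"
  proof -
    have e: "g (br X Y) Z = \<Psi> Z \<bullet> br X Y" if "X\<in>V" "Y\<in>V" "Z\<in>V" for X Y Z
      unfolding g_def pV_V[OF c that(3)] using into[of "?p (br X Y)" Z] pV_prop(1)[OF c] that(3)
      by simp
    show ?thesis unfolding tau2_zero_def Let_def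
    proof (intro ballI)
      fix X Y Z assume h: "X \<in> V" "Y \<in> V" "Z \<in> V"
      show "g (br X Y) Z = - g (br Y X) Z \<and> g (br X Y) Z = - g (br X Z) Y \<and> g (br X Y) Z = - g (br Z Y) X"
        using e[OF h] e[of Y X Z] e[of X Z Y] e[of Z Y X] h skew[OF h] by simp
    qed
  qed
  have t56: "tau56_zero br H g"
    unfolding tau56_zero_def g_def using sub unfolding lie_subalgebra_def
    by (simp add: pV_H[OF c] Psi0)
  show ?thesis
    using bil sym nd K t2 t56 unfolding GL_structure_compatible_def pseudo_metric_def by blast
qed

lemma pair_wedge:
  assumes "\<forall>\<eta>\<in>S. \<forall>a\<in>V. \<forall>b\<in>V. \<forall>c\<in>V. \<forall>d\<in>V. wedge22 \<eta> \<eta> a b c d = 0"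
    and "\<eta> \<in> S" "\<mu> \<in> S" "\<eta> + \<mu> \<in> S"
  shows "\<forall>a\<in>V. \<forall>b\<in>V. \<forall>c\<in>V. \<forall>d\<in>V. wedge22 \<eta> \<mu> a b c d = 0"
proof (intro ballI)
  fix a b c d assume h: "a \<in> V" "b \<in> V" "c \<in> V" "d \<in> V"
  have "wedge22 (\<eta>+\<mu>) (\<eta>+\<mu>) a b c d = wedge22 \<eta> \<eta> a b c d + wedge22 \<mu> \<mu> a b c d + 2 * wedge22 \<eta> \<mu> a b c d"
    by (simp add: wedge22_def algebra_simps)
  then show "wedge22 \<eta> \<mu> a b c d = 0" using assms h by simp
qed

lemma F_span3:
  assumes "x \<in> F.span {a, b, c}"
  shows "\<exists>k1 k2 k3. x = sc k1 a + sc k2 b + sc k3 c"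
proof -
  obtain k1 where "x - sc k1 a \<in> F.span {b, c}" using assms by (auto simp: F.span_insert[of a])
  then obtain k2 where "x - sc k1 a - sc k2 b \<in> F.span {c}" by (auto simp: F.span_insert[of b])
  then obtain k3 where "x - sc k1 a - sc k2 b = sc k3 c" by (auto simp: F.span_singleton)
  then have "x = sc k1 a + sc k2 b + sc k3 c" by (simp add: algebra_simps)
  then show ?thesis by blast
qed

lemma om_span3:
  fixes r s :: "'a::real_inner"
  assumes "r \<in> span {u1, u2, u3}" "s \<in> span {u1, u2, u3}"
  shows "\<exists>a b c. \<forall>x y. om r s x y = a * om u2 u3 x y + b * om u3 u1 x y + c * om u1 u2 x y"
proof -
  obtain r1 r2 r3 where r: "r = r1 *\<^sub>R u1 + r2 *\<^sub>R u2 + r3 *\<^sub>R u3" using assms(1) span3 by blast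
  obtain s1 s2 s3 where s: "s = s1 *\<^sub>R u1 + s2 *\<^sub>R u2 + s3 *\<^sub>R u3" using assms(2) span3 by blast
  have "om r s x y = (r2 * s3 - r3 * s2) * om u2 u3 x y + (r3 * s1 - r1 * s3) * om u3 u1 x y + (r1 * s2 - r2 * s1) * om u1 u2 x y" for x y
    by (simp add: r s om_def inner_add_left algebra_simps)
  then show ?thesis by blast
qed

theorem proposition7p2:
  fixes br :: "'a::euclidean_space \<Rightarrow> 'a \<Rightarrow> 'a" and V :: "'a set" and n :: nat
  assumes lie: "lie_bracket br"
    and dimg: "DIM('a) = 2 * n"
    and V: "subspace V" "dim V = n"
    and rank3: "dim_forms2 (NtH br V ` annihilator V) = 3"
    and simple: "\<forall>\<eta>\<in>NtH br V ` annihilator V.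
                   \<forall>a\<in>V. \<forall>b\<in>V. \<forall>c\<in>V. \<forall>d\<in>V. wedge22 \<eta> \<eta> a b c d = 0"
    and nodiv: "\<not> (\<exists>\<sigma>. linear \<sigma> \<and> (\<exists>v\<in>V. \<sigma> v \<noteq> 0) \<and>
                   (\<forall>\<eta>\<in>NtH br V ` annihilator V.
                      \<forall>a\<in>V. \<forall>b\<in>V. \<forall>c\<in>V. wedge12 \<sigma> \<eta> a b c = 0))"
  shows "\<forall>H. lie_subalgebra br H \<and> complementary V H \<longrightarrow>
           (\<exists>g. GL_structure_compatible V H g \<and> tau2_zero br V g \<and> tau56_zero br H g)"
proof (intro allI impI)
  fix H assume HH: "lie_subalgebra br H \<and> complementary V H"
  have bl: "bilinear br" using lie unfolding lie_bracket_def by auto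
  define W where "W = NtH br V ` annihilator V"
  have sW: "F.subspace W" unfolding W_def by (rule W_subspace)
  have dW: "F.dim W = 3" using rank3 unfolding W_def dim_forms2_F .
  have simpW: "\<forall>\<eta>\<in>W. \<forall>a\<in>V. \<forall>b\<in>V. \<forall>c\<in>V. \<forall>d\<in>V. wedge22 \<eta> \<eta> a b c d = 0"
    using simple unfolding W_def .
  obtain B where B: "B \<subseteq> W" "F.independent B" "W \<subseteq> F.span B" "card B = F.dim W"
    using F.basis_exists by blast
  have "\<exists>x y z. B = {x,y,z} \<and> x \<noteq> y \<and> y \<noteq> z \<and> x \<noteq> z" using B(4) dW by (simp add: card_3_iff)
  then obtain \<eta>1 \<eta>2 \<eta>3 where Beq: "B = {\<eta>1,\<eta>2,\<eta>3}" "\<eta>1 \<noteq> \<eta>2" "\<eta>2 \<noteq> \<eta>3" "\<eta>1 \<noteq> \<eta>3" by blast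
  have spanB: "F.span B = W" using B(1,3) F.span_minimal[OF B(1) sW] by blast
  have ebW: "\<eta>1 \<in> W" "\<eta>2 \<in> W" "\<eta>3 \<in> W" using B(1) Beq by auto
  have "0 \<notin> B" using B(2) F.dependent_zero by blast
  then have enz: "\<eta>1 \<noteq> 0" "\<eta>2 \<noteq> 0" "\<eta>3 \<noteq> 0" using Beq by auto
  have repW: "\<exists>p\<in>V. \<exists>q\<in>V. indep2 p q \<and> (\<forall>x\<in>V. \<forall>y\<in>V. \<eta> x y = om p q x y)"
    if th: "\<eta> \<in> W" "\<eta> \<noteq> 0" for \<eta>
  proof -
    obtain \<xi> where \<xi>: "\<xi> \<in> annihilator V" "\<eta> = NtH br V \<xi>" using th(1) unfolding W_def by blast
    show ?thesis using rep[OF bl V(1) \<xi>(1)] \<xi>(2) th simpW by auto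
  qed
  have restrW: "\<eta> = restrict2 V (om p q)" if th: "\<eta> \<in> W" "\<forall>x\<in>V. \<forall>y\<in>V. \<eta> x y = om p q x y" for \<eta> p q
  proof -
    obtain \<xi> where \<xi>: "\<eta> = NtH br V \<xi>" using th(1) unfolding W_def by blast
    show ?thesis using th(2) unfolding \<xi> by (auto simp: fun_eq_iff NtH_app restrict2_def)
  qed
  obtain p1 q1 where pq1: "p1 \<in> V" "q1 \<in> V" "indep2 p1 q1" "\<forall>x\<in>V. \<forall>y\<in>V. \<eta>1 x y = om p1 q1 x y"
    using repW[OF ebW(1) enz(1)] by blast
  obtain p2 q2 where pq2: "p2 \<in> V" "q2 \<in> V" "indep2 p2 q2" "\<forall>x\<in>V. \<forall>y\<in>V. \<eta>2 x y = om p2 q2 x y"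
    using repW[OF ebW(2) enz(2)] by blast
  obtain p3 q3 where pq3: "p3 \<in> V" "q3 \<in> V" "indep2 p3 q3" "\<forall>x\<in>V. \<forall>y\<in>V. \<eta>3 x y = om p3 q3 x y"
    using repW[OF ebW(3) enz(3)] by blast
  have r1: "\<eta>1 = restrict2 V (om p1 q1)" by (rule restrW[OF ebW(1) pq1(4)])
  have r2: "\<eta>2 = restrict2 V (om p2 q2)" by (rule restrW[OF ebW(2) pq2(4)])
  have r3: "\<eta>3 = restrict2 V (om p3 q3)" by (rule restrW[OF ebW(3) pq3(4)])
  have pairZ: "\<exists>z. z \<noteq> 0 \<and> z \<in> span {p,q} \<and> z \<in> span {r,s}"
    if "\<eta> \<in> W" "\<mu> \<in> W" "p \<in> V" "q \<in> V" "r \<in> V" "s \<in> V" "indep2 p q" "indep2 r s"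
       "\<forall>x\<in>V. \<forall>y\<in>V. \<eta> x y = om p q x y" "\<forall>x\<in>V. \<forall>y\<in>V. \<mu> x y = om r s x y" for \<eta> \<mu> p q r s
  proof -
    have "\<eta> + \<mu> \<in> W" using sW that(1,2) by (rule F.subspace_add)
    then have w: "\<forall>a\<in>V. \<forall>b\<in>V. \<forall>c\<in>V. \<forall>d\<in>V. wedge22 \<eta> \<mu> a b c d = 0"
      using pair_wedge[OF simpW that(1,2)] by blast
    have "\<forall>a\<in>V. \<forall>b\<in>V. \<forall>c\<in>V. \<forall>d\<in>V. wedge22 (om p q) (om r s) a b c d = 0"
    proof (intro ballI)
      fix a b c d assume h: "a \<in> V" "b \<in> V" "c \<in> V" "d \<in> V"
      have "wedge22 \<eta> \<mu> a b c d = wedge22 (om p q) (om r s) a b c d"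
        unfolding wedge22_def using that(9,10) h by simp
      then show "wedge22 (om p q) (om r s) a b c d = 0" using w h by simp
    qed
    then show ?thesis using L2[OF V(1) that(3-8)] by blast
  qed
  have z12: "\<exists>z. z \<noteq> 0 \<and> z \<in> span {p1,q1} \<and> z \<in> span {p2,q2}"
    by (rule pairZ[OF ebW(1) ebW(2) pq1(1,2) pq2(1,2) pq1(3) pq2(3) pq1(4) pq2(4)])
  have z13: "\<exists>z. z \<noteq> 0 \<and> z \<in> span {p1,q1} \<and> z \<in> span {p3,q3}"
    by (rule pairZ[OF ebW(1) ebW(3) pq1(1,2) pq3(1,2) pq1(3) pq3(3) pq1(4) pq3(4)])
  have z23: "\<exists>z. z \<noteq> 0 \<and> z \<in> span {p2,q2} \<and> z \<in> span {p3,q3}"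
    by (rule pairZ[OF ebW(2) ebW(3) pq2(1,2) pq3(1,2) pq2(3) pq3(3) pq2(4) pq3(4)])
  have ne12: "\<not> (p2 \<in> span {p1,q1} \<and> q2 \<in> span {p1,q1})"
  proof
    assume "p2 \<in> span {p1,q1} \<and> q2 \<in> span {p1,q1}"
    then obtain c where c: "\<forall>x y. om p2 q2 x y = c * om p1 q1 x y" using om_span by blast
    have "\<eta>2 = sc c \<eta>1" unfolding r1 r2 using c by (simp add: fun_eq_iff restrict2_def)
    moreover have "\<eta>1 \<in> B - {\<eta>2}" using Beq by auto
    ultimately have "\<eta>2 \<in> F.span (B - {\<eta>2})" by (auto intro: F.span_scale F.span_base)
    then have "F.dependent B" unfolding F.dependent_def using Beq by blast
    then show False using B(2) by simp
  qed
  have Wcomb: "\<exists>k1 k2 k3. \<eta> = sc k1 \<eta>1 + sc k2 \<eta>2 + sc k3 \<eta>3" if "\<eta> \<in> W" for \<eta>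
    using that spanB Beq F_span3 by blast
  have nc: "\<forall>z. z \<in> span {p1,q1} \<and> z \<in> span {p2,q2} \<and> z \<in> span {p3,q3} \<longrightarrow> z = 0"
  proof (intro allI impI, rule ccontr)
    fix z assume z: "z \<in> span {p1,q1} \<and> z \<in> span {p2,q2} \<and> z \<in> span {p3,q3}" and nz: "z \<noteq> 0"
    have zV: "z \<in> V" using z pq1 V(1) span_minimal[of "{p1,q1}" V] by auto
    define \<sigma> where "\<sigma> = (\<lambda>x. z \<bullet> x)"
    have ls: "linear \<sigma>" unfolding \<sigma>_def by (auto intro!: linearI simp: inner_add_right)
    have sz: "\<sigma> z \<noteq> 0" using nz unfolding \<sigma>_def by simp
    have w0: "wedge12 \<sigma> \<eta> a b c = 0" if th: "\<eta> \<in> W" "a \<in> V" "b \<in> V" "c \<in> V" for \<eta> a b c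
    proof -
      obtain k1 k2 k3 where k: "\<eta> = sc k1 \<eta>1 + sc k2 \<eta>2 + sc k3 \<eta>3" using Wcomb[OF th(1)] by blast
      have e: "wedge12 \<sigma> \<eta> a b c = k1 * wedge12 \<sigma> \<eta>1 a b c + k2 * wedge12 \<sigma> \<eta>2 a b c + k3 * wedge12 \<sigma> \<eta>3 a b c"
        unfolding k wedge12_def by (simp add: algebra_simps)
      have "wedge12 \<sigma> \<eta>1 a b c = wedge12 \<sigma> (om p1 q1) a b c" unfolding wedge12_def using pq1(4) th by simp
      also have "\<dots> = 0" unfolding \<sigma>_def by (rule wedge12_span) (use z in blast)
      finally have 1: "wedge12 \<sigma> \<eta>1 a b c = 0" .
      have "wedge12 \<sigma> \<eta>2 a b c = wedge12 \<sigma> (om p2 q2) a b c" unfolding wedge12_def using pq2(4) th by simp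
      also have "\<dots> = 0" unfolding \<sigma>_def by (rule wedge12_span) (use z in blast)
      finally have 2: "wedge12 \<sigma> \<eta>2 a b c = 0" .
      have "wedge12 \<sigma> \<eta>3 a b c = wedge12 \<sigma> (om p3 q3) a b c" unfolding wedge12_def using pq3(4) th by simp
      also have "\<dots> = 0" unfolding \<sigma>_def by (rule wedge12_span) (use z in blast)
      finally have 3: "wedge12 \<sigma> \<eta>3 a b c = 0" .
      show ?thesis using e 1 2 3 by simp
    qed
    have "\<exists>\<sigma>. linear \<sigma> \<and> (\<exists>v\<in>V. \<sigma> v \<noteq> 0) \<and>
                   (\<forall>\<eta>\<in>NtH br V ` annihilator V. \<forall>a\<in>V. \<forall>b\<in>V. \<forall>c\<in>V. wedge12 \<sigma> \<eta> a b c = 0)"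
      using ls sz zV w0 unfolding W_def by blast
    then show False using nodiv by blast
  qed
  obtain u1 u2 u3 where u: "u1 \<in> V" "u2 \<in> V" "u3 \<in> V"
     "u1 \<bullet> u1 = 1" "u2 \<bullet> u2 = 1" "u3 \<bullet> u3 = 1" "u1 \<bullet> u2 = 0" "u1 \<bullet> u3 = 0" "u2 \<bullet> u3 = 0"
     "{p1,q1,p2,q2,p3,q3} \<subseteq> span {u1,u2,u3}"
    using geom[OF V(1) pq1(1,2) pq2(1,2) pq1(3) pq2(3) pq3(3) ne12 z12 z13 z23 nc] by blast
  define \<Theta>1 where "\<Theta>1 = restrict2 V (om u2 u3)"
  define \<Theta>2 where "\<Theta>2 = restrict2 V (om u3 u1)"
  define \<Theta>3 where "\<Theta>3 = restrict2 V (om u1 u2)"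
  have inspan: "restrict2 V (om p q) \<in> F.span {\<Theta>1,\<Theta>2,\<Theta>3}"
    if sp: "p \<in> span {u1,u2,u3}" "q \<in> span {u1,u2,u3}" for p q
  proof -
    obtain a b c where abc: "\<forall>x y. om p q x y = a * om u2 u3 x y + b * om u3 u1 x y + c * om u1 u2 x y"
      using om_span3[OF sp] by blast
    have "restrict2 V (om p q) = sc a \<Theta>1 + sc b \<Theta>2 + sc c \<Theta>3"
      unfolding \<Theta>1_def \<Theta>2_def \<Theta>3_def using abc by (simp add: fun_eq_iff restrict2_def)
    moreover have "sc a \<Theta>1 + sc b \<Theta>2 + sc c \<Theta>3 \<in> F.span {\<Theta>1,\<Theta>2,\<Theta>3}"
      by (intro F.span_add F.span_scale F.span_base) auto
    ultimately show ?thesis by simp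
  qed
  have us: "p1 \<in> span {u1,u2,u3}" "q1 \<in> span {u1,u2,u3}" "p2 \<in> span {u1,u2,u3}"
    "q2 \<in> span {u1,u2,u3}" "p3 \<in> span {u1,u2,u3}" "q3 \<in> span {u1,u2,u3}" using u(10) by auto
  have BinT: "B \<subseteq> F.span {\<Theta>1,\<Theta>2,\<Theta>3}"
    unfolding Beq r1 r2 r3 using inspan[OF us(1,2)] inspan[OF us(3,4)] inspan[OF us(5,6)] by blast
  have TinB: "\<theta> \<in> F.span B" if th: "\<theta> \<in> {\<Theta>1,\<Theta>2,\<Theta>3}" for \<theta>
  proof (rule ccontr)
    assume n\<theta>: "\<theta> \<notin> F.span B"
    have \<theta>nB: "\<theta> \<notin> B"
    proof
      assume "\<theta> \<in> B" then have "\<theta> \<in> F.span B" by (rule F.span_base)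
      with n\<theta> show False by simp
    qed
    have ind: "F.independent (insert \<theta> B)" by (rule F.independent_insertI[OF n\<theta> B(2)])
    have "\<theta> \<in> F.span {\<Theta>1,\<Theta>2,\<Theta>3}" using th by (rule F.span_base)
    then have sub: "insert \<theta> B \<subseteq> F.span {\<Theta>1,\<Theta>2,\<Theta>3}" using BinT by simp
    have fT: "finite {\<Theta>1,\<Theta>2,\<Theta>3}" by simp
    have c1: "card (insert \<theta> B) \<le> card {\<Theta>1,\<Theta>2,\<Theta>3}"
      using F.independent_span_bound[OF fT ind sub] by (rule conjunct2)
    have c2: "card {\<Theta>1,\<Theta>2,\<Theta>3} \<le> 3" using card_length[of "[\<Theta>1,\<Theta>2,\<Theta>3]"] by simp
    have fB: "finite B" using Beq by simp
    have c3: "card (insert \<theta> B) = Suc (card B)" by (rule card_insert_disjoint[OF fB \<theta>nB])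
    have "card B = 3" using B(4) dW by simp
    with c1 c2 c3 show False by simp
  qed
  have TW: "\<Theta>1 \<in> W" "\<Theta>2 \<in> W" "\<Theta>3 \<in> W" using TinB spanB by auto
  have kex: "\<exists>k. (\<forall>v\<in>V. k \<bullet> v = 0) \<and> (\<forall>x\<in>V. \<forall>y\<in>V. k \<bullet> br x y = - om a b x y)"
    if th: "restrict2 V (om a b) \<in> W" for a b
  proof -
    obtain \<zeta> where \<zeta>: "\<zeta> \<in> annihilator V" "NtH br V \<zeta> = restrict2 V (om a b)"
      using th unfolding W_def by auto
    have l: "linear \<zeta>" "\<forall>v\<in>V. \<zeta> v = 0" using \<zeta>(1) unfolding annihilator_def by auto
    obtain k where k: "\<forall>x. \<zeta> x = k \<bullet> x" using riesz[OF l(1)] by blast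
    have "\<forall>v\<in>V. k \<bullet> v = 0" using l(2) k by simp
    moreover have "\<forall>x\<in>V. \<forall>y\<in>V. k \<bullet> br x y = - om a b x y"
    proof (intro ballI)
      fix x y assume xy: "x \<in> V" "y \<in> V"
      have "NtH br V \<zeta> x y = restrict2 V (om a b) x y" using \<zeta>(2) by simp
      then show "k \<bullet> br x y = - om a b x y" using xy k by (simp add: NtH_app restrict2_def)
    qed
    ultimately show ?thesis by blast
  qed
  obtain k1 where k1: "\<forall>v\<in>V. k1 \<bullet> v = 0" "\<forall>x\<in>V. \<forall>y\<in>V. k1 \<bullet> br x y = - om u2 u3 x y"
    using kex TW(1) unfolding \<Theta>1_def by blast
  obtain k2 where k2: "\<forall>v\<in>V. k2 \<bullet> v = 0" "\<forall>x\<in>V. \<forall>y\<in>V. k2 \<bullet> br x y = - om u3 u1 x y"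
    using kex TW(2) unfolding \<Theta>2_def by blast
  obtain k3 where k3: "\<forall>v\<in>V. k3 \<bullet> v = 0" "\<forall>x\<in>V. \<forall>y\<in>V. k3 \<bullet> br x y = - om u1 u2 x y"
    using kex TW(3) unfolding \<Theta>3_def by blast
  have WT: "W \<subseteq> F.span {\<Theta>1,\<Theta>2,\<Theta>3}"
    using spanB F.span_mono[OF BinT] F.span_span by blast
  have surj: "\<forall>k. (\<forall>v\<in>V. k \<bullet> v = 0) \<longrightarrow> (\<exists>c1 c2 c3. \<forall>x\<in>V. \<forall>y\<in>V.
                 k \<bullet> br x y = - (c1 * om u2 u3 x y + c2 * om u3 u1 x y + c3 * om u1 u2 x y))"
  proof (intro allI impI)
    fix k assume kV: "\<forall>v\<in>V. k \<bullet> v = 0"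
    have "(\<lambda>x. k \<bullet> x) \<in> annihilator V" unfolding annihilator_def using kV
      by (auto intro!: linearI simp: inner_add_right)
    then have "NtH br V (\<lambda>x. k \<bullet> x) \<in> W" unfolding W_def by blast
    then have "NtH br V (\<lambda>x. k \<bullet> x) \<in> F.span {\<Theta>1,\<Theta>2,\<Theta>3}" using WT by blast
    then obtain c1 c2 c3 where c: "NtH br V (\<lambda>x. k \<bullet> x) = sc c1 \<Theta>1 + sc c2 \<Theta>2 + sc c3 \<Theta>3"
      using F_span3 by blast
    have "k \<bullet> br x y = - (c1 * om u2 u3 x y + c2 * om u3 u1 x y + c3 * om u1 u2 x y)"
      if xy: "x \<in> V" "y \<in> V" for x y
    proof -
      have "NtH br V (\<lambda>x. k \<bullet> x) x y = (sc c1 \<Theta>1 + sc c2 \<Theta>2 + sc c3 \<Theta>3) x y" using c by simp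
      then show ?thesis using xy unfolding \<Theta>1_def \<Theta>2_def \<Theta>3_def by (simp add: NtH_app restrict2_def)
    qed
    then show "\<exists>c1 c2 c3. \<forall>x\<in>V. \<forall>y\<in>V.
                 k \<bullet> br x y = - (c1 * om u2 u3 x y + c2 * om u3 u1 x y + c3 * om u1 u2 x y)" by blast
  qed
  obtain \<Psi> where \<Psi>: "linear \<Psi>" "\<forall>z\<in>V. \<forall>v\<in>V. \<Psi> z \<bullet> v = 0"
           "\<forall>k. (\<forall>v\<in>V. k \<bullet> v = 0) \<longrightarrow> (\<exists>z\<in>V. \<Psi> z = k)" "\<forall>z\<in>V. \<Psi> z = 0 \<longrightarrow> z = 0"
           "\<forall>X\<in>V. \<forall>Y\<in>V. \<forall>Z\<in>V. \<Psi> Z \<bullet> br X Y =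
              - ((u1 \<bullet> Z) * om u2 u3 X Y + (u2 \<bullet> Z) * om u3 u1 X Y + (u3 \<bullet> Z) * om u1 u2 X Y)"
    using construct_Psi[OF V(1) V(2) dimg u(1-9) k1(1) k2(1) k3(1) k1(2) k2(2) k3(2) surj] by blast
  have skew: "\<Psi> Z \<bullet> br X Y = - (\<Psi> X \<bullet> br Z Y) \<and> \<Psi> Z \<bullet> br X Y = - (\<Psi> Y \<bullet> br X Z) \<and> \<Psi> Z \<bullet> br X Y = - (\<Psi> Z \<bullet> br Y X)"
    if xyz: "X \<in> V" "Y \<in> V" "Z \<in> V" for X Y Z
  proof -
    have f1: "\<Psi> Z \<bullet> br X Y = - ((u1 \<bullet> Z) * om u2 u3 X Y + (u2 \<bullet> Z) * om u3 u1 X Y + (u3 \<bullet> Z) * om u1 u2 X Y)"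
      using \<Psi>(5) xyz by blast
    have f2: "\<Psi> X \<bullet> br Z Y = - ((u1 \<bullet> X) * om u2 u3 Z Y + (u2 \<bullet> X) * om u3 u1 Z Y + (u3 \<bullet> X) * om u1 u2 Z Y)"
      using \<Psi>(5) xyz by blast
    have f3: "\<Psi> Y \<bullet> br X Z = - ((u1 \<bullet> Y) * om u2 u3 X Z + (u2 \<bullet> Y) * om u3 u1 X Z + (u3 \<bullet> Y) * om u1 u2 X Z)"
      using \<Psi>(5) xyz by blast
    have f4: "\<Psi> Z \<bullet> br Y X = - ((u1 \<bullet> Z) * om u2 u3 Y X + (u2 \<bullet> Z) * om u3 u1 Y X + (u3 \<bullet> Z) * om u1 u2 Y X)"
      using \<Psi>(5) xyz by blast
    show ?thesis unfolding f1 f2 f3 f4 by (simp add: om_def algebra_simps)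
  qed
  show "\<exists>g. GL_structure_compatible V H g \<and> tau2_zero br V g \<and> tau56_zero br H g"
    apply (rule construct_g[where \<Psi>=\<Psi>])
    using HH apply blast
    using HH apply blast
        apply (rule \<Psi>(1))
    using \<Psi>(2) apply blast
    using \<Psi>(3) apply blast
    using \<Psi>(4) apply blast
    using skew apply blast
    done
qed

end
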